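(* Let $(X,d_X)$ be an extended pseudometric space, $\Delta\subset X$, and $S,T$ multisets of elements of $X$. Then $d^{\Delta,d_X}_\infty(S,T)=\max\{\delta^{\Delta,d_X}_\infty(S,T),\ \delta^{\Delta,d_X}_\infty(T,S)\}.$
   Context: An extended pseudometric is a symmetric function $d_X\colon X\times X\to[0,\infty]$ satisfying the triangle inequality and $d_X(x,x)=0$. A multiset of elements of $X$ is a set together with a map to $X$. For $\epsilon\ge0$, an $\epsilon$-matching between $S$ and $T$ relative to $\Delta$ consists of submultisets $S'\subset S$, $T'\subset T$ such that every $x\in(S\setminus S')\cup(T\setminus T')$ has some $y\in\Delta$ with $d_X(x,y)\le\epsilon$, together with a bijection $f\colon S'\to T'$ with $d_X(x,f(x))\le\epsilon$ for all $x\in S'$. An $\epsilon$-embedding of $S$ into $T$ relative to $\Delta$ consists of a submultiset $S'\subset S$ such that every $x\in S\setminus S'$ has some $y\in\Delta$ with $d_X(x,y)\le\epsilon$, together with an injection $f\colon S'\to T$ with $d_X(x,f(x))\le\epsilon$ for all $x\in S'$. The bottleneck distance is $d^{\Delta,d_X}_\infty(S,T)=\inf\{\epsilon\ge0:\text{an }\epsilon\text{-matching between }S,T\text{ relative to }\Delta\text{ exists}\}$ and the hemidistance is $\delta^{\Delta,d_X}_\infty(S,T)=\inf\{\epsilon\ge0:\text{an }\epsilon\text{-embedding of }S\text{ into }T\text{ relative to }\Delta\text{ exists}\}$ (infimum of the empty set $=\infty$). *)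

theory Defs
  imports "HOL-Library.Extended_Nonnegative_Real"
begin

definition ext_pseudometric :: "('x \<Rightarrow> 'x \<Rightarrow> ennreal) \<Rightarrow> bool" where
  "ext_pseudometric d \<longleftrightarrow> (\<forall>x. d x x = 0) \<and> (\<forall>x y. d x y = d y x)
     \<and> (\<forall>x y z. d x z \<le> d x y + d y z)"

text \<open>A multiset of elements of X is represented by an index set A together with a map
  s from indices to X. Submultisets are subsets of the index set.\<close>

definition eps_matching ::
  "('x \<Rightarrow> 'x \<Rightarrow> ennreal) \<Rightarrow> 'x set \<Rightarrow> real \<Rightarrow> 'a set \<Rightarrow> ('a \<Rightarrow> 'x) \<Rightarrow> 'b set \<Rightarrow> ('b \<Rightarrow> 'x) \<Rightarrow> bool" where
  "eps_matching d \<Delta> \<epsilon> A s B t \<longleftrightarrow>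
     (\<exists>A' B' f. A' \<subseteq> A \<and> B' \<subseteq> B
        \<and> (\<forall>a\<in>A - A'. \<exists>y\<in>\<Delta>. d (s a) y \<le> ennreal \<epsilon>)
        \<and> (\<forall>b\<in>B - B'. \<exists>y\<in>\<Delta>. d (t b) y \<le> ennreal \<epsilon>)
        \<and> bij_betw f A' B'
        \<and> (\<forall>a\<in>A'. d (s a) (t (f a)) \<le> ennreal \<epsilon>))"

definition eps_embedding ::
  "('x \<Rightarrow> 'x \<Rightarrow> ennreal) \<Rightarrow> 'x set \<Rightarrow> real \<Rightarrow> 'a set \<Rightarrow> ('a \<Rightarrow> 'x) \<Rightarrow> 'b set \<Rightarrow> ('b \<Rightarrow> 'x) \<Rightarrow> bool" where
  "eps_embedding d \<Delta> \<epsilon> A s B t \<longleftrightarrow>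
     (\<exists>A' f. A' \<subseteq> A
        \<and> (\<forall>a\<in>A - A'. \<exists>y\<in>\<Delta>. d (s a) y \<le> ennreal \<epsilon>)
        \<and> inj_on f A' \<and> f ` A' \<subseteq> B
        \<and> (\<forall>a\<in>A'. d (s a) (t (f a)) \<le> ennreal \<epsilon>))"

definition bottleneck_dist ::
  "('x \<Rightarrow> 'x \<Rightarrow> ennreal) \<Rightarrow> 'x set \<Rightarrow> 'a set \<Rightarrow> ('a \<Rightarrow> 'x) \<Rightarrow> 'b set \<Rightarrow> ('b \<Rightarrow> 'x) \<Rightarrow> ennreal" where
  "bottleneck_dist d \<Delta> A s B t =
     Inf (ennreal ` {\<epsilon>. \<epsilon> \<ge> 0 \<and> eps_matching d \<Delta> \<epsilon> A s B t})"

definition hemidist ::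
  "('x \<Rightarrow> 'x \<Rightarrow> ennreal) \<Rightarrow> 'x set \<Rightarrow> 'a set \<Rightarrow> ('a \<Rightarrow> 'x) \<Rightarrow> 'b set \<Rightarrow> ('b \<Rightarrow> 'x) \<Rightarrow> ennreal" where
  "hemidist d \<Delta> A s B t =
     Inf (ennreal ` {\<epsilon>. \<epsilon> \<ge> 0 \<and> eps_embedding d \<Delta> \<epsilon> A s B t})"

end

theory Submission
  imports Defs
begin

inductive_set csb_set :: "'a set \<Rightarrow> 'a set \<Rightarrow> ('a \<Rightarrow> 'b) \<Rightarrow> 'b set \<Rightarrow> ('b \<Rightarrow> 'a) \<Rightarrow> 'a set"
  for A A' f B' g where
  base: "a \<in> A \<Longrightarrow> a \<notin> g ` B' \<Longrightarrow> a \<in> csb_set A A' f B' g"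
| step: "a \<in> csb_set A A' f B' g \<Longrightarrow> a \<in> A' \<Longrightarrow> f a \<in> B' \<Longrightarrow> g (f a) \<in> csb_set A A' f B' g"

lemma embeddings_to_matching:
  assumes sym: "\<And>x y. d x y = d y x"
    and e1: "eps_embedding d \<Delta> e A s B t" and e2: "eps_embedding d \<Delta> e B t A s"
  shows "eps_matching d \<Delta> e A s B t"
proof -
  obtain A' f where A': "A' \<subseteq> A" "\<forall>a\<in>A - A'. \<exists>y\<in>\<Delta>. d (s a) y \<le> ennreal e"
    "inj_on f A'" "f ` A' \<subseteq> B" "\<forall>a\<in>A'. d (s a) (t (f a)) \<le> ennreal e"
    using e1 unfolding eps_embedding_def by blast
  obtain B' g where B': "B' \<subseteq> B" "\<forall>b\<in>B - B'. \<exists>y\<in>\<Delta>. d (t b) y \<le> ennreal e"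
    "inj_on g B'" "g ` B' \<subseteq> A" "\<forall>b\<in>B'. d (t b) (s (g b)) \<le> ennreal e"
    using e2 unfolding eps_embedding_def by blast
  define C where "C = csb_set A A' f B' g"
  have CA: "C \<subseteq> A"
  proof
    fix a assume "a \<in> C" then show "a \<in> A" unfolding C_def
      by (induction rule: csb_set.induct) (use B' in auto)
  qed
  define A'' where "A'' = (C \<inter> A') \<union> (A - C)"
  define F where "F a = (if a \<in> C then f a else inv_into B' g a)" for a
  define B'' where "B'' = F ` A''"
  have notC: "a \<in> A - C \<Longrightarrow> a \<in> g ` B'" for a
  proof (rule ccontr)
    assume a: "a \<in> A - C" and n: "a \<notin> g ` B'"
    from a have "a \<in> A" by simp
    from csb_set.base[OF this n] have "a \<in> C" by (simp add: C_def)
    with a show False by simp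
  qed
  have Fc: "a \<in> C \<Longrightarrow> F a = f a" for a unfolding F_def by simp
  have Fn: "a \<notin> C \<Longrightarrow> F a = inv_into B' g a" for a unfolding F_def by simp
  have gen: "u = v" if u: "u \<in> C \<inter> A'" and v: "v \<in> A - C" and eq: "f u = inv_into B' g v" for u v
  proof -
    have vg: "v \<in> g ` B'" using notC v by blast
    have "inv_into B' g v \<in> B'" using vg by (rule inv_into_into)
    moreover have "g (inv_into B' g v) = v" using vg by (rule f_inv_into_f)
    ultimately have "f u \<in> B'" "g (f u) = v" using eq by simp_all
    then have "v \<in> C" using u unfolding C_def using csb_set.step[of u A A' f B' g] by simp
    then show ?thesis using v by blast
  qed
  have injF: "inj_on F A''"
  proof (rule inj_onI)
    fix x y assume x: "x \<in> A''" and y: "y \<in> A''" and eq: "F x = F y"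
    show "x = y"
    proof (cases "x \<in> C")
      case xC: True
      show ?thesis
      proof (cases "y \<in> C")
        case True
        then have "f x = f y" "x \<in> A'" "y \<in> A'" using xC x y eq Fc unfolding A''_def by auto
        then show ?thesis using A'(3) by (simp add: inj_on_def)
      next
        case False
        then have "x \<in> C \<inter> A'" "y \<in> A - C" "f x = inv_into B' g y"
          using xC x y eq Fc Fn unfolding A''_def by auto
        then show ?thesis by (rule gen)
      qed
    next
      case xC: False
      show ?thesis
      proof (cases "y \<in> C")
        case True
        then have "y \<in> C \<inter> A'" "x \<in> A - C" "f y = inv_into B' g x"
          using xC x y eq Fc Fn unfolding A''_def by auto
        then show ?thesis using gen by metis
      next
        case False
        have xg: "x \<in> g ` B'" and yg: "y \<in> g ` B'" using notC x y xC False unfolding A''_def by auto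
        have "inv_into B' g x = inv_into B' g y" using eq Fn xC False by simp
        then have "g (inv_into B' g x) = g (inv_into B' g y)" by simp
        then show ?thesis using f_inv_into_f[OF xg] f_inv_into_f[OF yg] by simp
      qed
    qed
  qed
  show ?thesis unfolding eps_matching_def
  proof (intro exI conjI)
    show "A'' \<subseteq> A" unfolding A''_def using A' by auto
    show "B'' \<subseteq> B"
    proof
      fix b assume "b \<in> B''"
      then obtain a where a: "a \<in> A''" "b = F a" unfolding B''_def by auto
      show "b \<in> B"
      proof (cases "a \<in> C")
        case True then show ?thesis using a A'(4) unfolding F_def A''_def by auto
      next
        case False
        then have "a \<in> g ` B'" using notC a unfolding A''_def by auto
        then have "inv_into B' g a \<in> B'" by (rule inv_into_into)
        then show ?thesis using False a B'(1) Fn by auto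
      qed
    qed
    show "\<forall>a\<in>A - A''. \<exists>y\<in>\<Delta>. d (s a) y \<le> ennreal e"
      using A'(2) unfolding A''_def by auto
    show "bij_betw F A'' B''" unfolding B''_def using injF by (simp add: bij_betw_def)
    show "\<forall>a\<in>A''. d (s a) (t (F a)) \<le> ennreal e"
    proof
      fix a assume a: "a \<in> A''"
      show "d (s a) (t (F a)) \<le> ennreal e"
      proof (cases "a \<in> C")
        case True then show ?thesis using a A'(5) unfolding F_def A''_def by auto
      next
        case False
        then have ag: "a \<in> g ` B'" using notC a unfolding A''_def by auto
        then have "inv_into B' g a \<in> B'" "g (inv_into B' g a) = a"
          by (auto intro: inv_into_into f_inv_into_f)
        then have "d (t (inv_into B' g a)) (s a) \<le> ennreal e" using B'(5) by metis
        then show ?thesis using False sym unfolding F_def by simp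
      qed
    qed
    show "\<forall>b\<in>B - B''. \<exists>y\<in>\<Delta>. d (t b) y \<le> ennreal e"
    proof
      fix b assume b: "b \<in> B - B''"
      have "b \<notin> B'"
      proof
        assume bB: "b \<in> B'"
        show False
        proof (cases "g b \<in> C")
          case False
          have "g b \<in> A" using bB B'(4) by auto
          then have "g b \<in> A''" using False unfolding A''_def by auto
          moreover have "F (g b) = b" using False bB B'(3) unfolding F_def by (simp add: inv_into_f_f)
          ultimately show False using b unfolding B''_def by force
        next
          case True
          then have "g b \<in> csb_set A A' f B' g" unfolding C_def .
          then show False
          proof cases
            case base then show ?thesis using bB by auto
          next
            case (step a)
            then have "b = f a" using bB B'(3) by (auto dest: inj_onD)
            moreover have "a \<in> A''" "F a = f a" using step unfolding A''_def F_def C_def by auto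
            ultimately show False using b unfolding B''_def by force
          qed
        qed
      qed
      then show "\<exists>y\<in>\<Delta>. d (t b) y \<le> ennreal e" using B'(2) b by auto
    qed
  qed
qed

lemma matching_embedding1:
  "eps_matching d \<Delta> e A s B t \<Longrightarrow> eps_embedding d \<Delta> e A s B t"
  unfolding eps_matching_def eps_embedding_def bij_betw_def by blast

lemma matching_embedding2:
  assumes sym: "\<And>x y. d x y = d y x" and m: "eps_matching d \<Delta> e A s B t"
  shows "eps_embedding d \<Delta> e B t A s"
proof -
  obtain A' B' f where h: "A' \<subseteq> A" "B' \<subseteq> B"
        "\<forall>a\<in>A - A'. \<exists>y\<in>\<Delta>. d (s a) y \<le> ennreal e"
        "\<forall>b\<in>B - B'. \<exists>y\<in>\<Delta>. d (t b) y \<le> ennreal e"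
        "bij_betw f A' B'" "\<forall>a\<in>A'. d (s a) (t (f a)) \<le> ennreal e"
    using m unfolding eps_matching_def by blast
  have bi: "bij_betw (inv_into A' f) B' A'" using h(5) by (rule bij_betw_inv_into)
  show ?thesis unfolding eps_embedding_def
  proof (intro exI conjI)
    show "B' \<subseteq> B" by fact
    show "\<forall>b\<in>B - B'. \<exists>y\<in>\<Delta>. d (t b) y \<le> ennreal e" by fact
    show "inj_on (inv_into A' f) B'" using bi by (simp add: bij_betw_def)
    show "inv_into A' f ` B' \<subseteq> A" using bi h(1) by (simp add: bij_betw_def)
    show "\<forall>b\<in>B'. d (t b) (s (inv_into A' f b)) \<le> ennreal e"
    proof
      fix b assume b: "b \<in> B'"
      have "inv_into A' f b \<in> A'" "f (inv_into A' f b) = b"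
        using b h(5) by (auto simp: bij_betw_def intro: inv_into_into f_inv_into_f)
      then show "d (t b) (s (inv_into A' f b)) \<le> ennreal e" using h(6) sym by metis
    qed
  qed
qed

lemma embedding_mono:
  "eps_embedding d \<Delta> e A s B t \<Longrightarrow> e \<le> e' \<Longrightarrow> eps_embedding d \<Delta> e' A s B t"
  unfolding eps_embedding_def
  by (meson ennreal_leI order_trans)

theorem proposition7p2:
  fixes d :: "'x \<Rightarrow> 'x \<Rightarrow> ennreal" and \<Delta> :: "'x set"
    and A :: "'a set" and s :: "'a \<Rightarrow> 'x" and B :: "'b set" and t :: "'b \<Rightarrow> 'x"
  assumes "ext_pseudometric d"
  shows "bottleneck_dist d \<Delta> A s B t = max (hemidist d \<Delta> A s B t) (hemidist d \<Delta> B t A s)"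
proof -
  have sym: "\<And>x y. d x y = d y x" using assms unfolding ext_pseudometric_def by blast
  define M where "M = {\<epsilon>. \<epsilon> \<ge> 0 \<and> eps_matching d \<Delta> \<epsilon> A s B t}"
  define E1 where "E1 = {\<epsilon>. \<epsilon> \<ge> 0 \<and> eps_embedding d \<Delta> \<epsilon> A s B t}"
  define E2 where "E2 = {\<epsilon>. \<epsilon> \<ge> 0 \<and> eps_embedding d \<Delta> \<epsilon> B t A s}"
  have ME1: "M \<subseteq> E1" unfolding M_def E1_def using matching_embedding1 by blast
  have ME2: "M \<subseteq> E2" unfolding M_def E2_def using matching_embedding2[of d, OF sym] by blast
  have le1: "Inf (ennreal ` E1) \<le> Inf (ennreal ` M)"
    by (rule Inf_superset_mono) (use ME1 in auto)
  have le2: "Inf (ennreal ` E2) \<le> Inf (ennreal ` M)"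
    by (rule Inf_superset_mono) (use ME2 in auto)
  have ge: "Inf (ennreal ` M) \<le> max (Inf (ennreal ` E1)) (Inf (ennreal ` E2))"
  proof (rule dense_ge)
    fix y assume y: "max (Inf (ennreal ` E1)) (Inf (ennreal ` E2)) < y"
    then have "Inf (ennreal ` E1) < y" "Inf (ennreal ` E2) < y" by auto
    then obtain e1 e2 where e1: "e1 \<in> E1" "ennreal e1 < y" and e2: "e2 \<in> E2" "ennreal e2 < y"
      by (auto simp: Inf_less_iff)
    define e where "e = max e1 e2"
    have "eps_embedding d \<Delta> e A s B t" using e1 embedding_mono[of d \<Delta> e1 A s B t "max e1 e2"] unfolding E1_def e_def by auto
    moreover have "eps_embedding d \<Delta> e B t A s" using e2 embedding_mono[of d \<Delta> e2 B t A s "max e1 e2"] unfolding E2_def e_def by auto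
    ultimately have "eps_matching d \<Delta> e A s B t" using embeddings_to_matching[of d, OF sym] by blast
    then have "e \<in> M" using e1 unfolding M_def E1_def e_def by auto
    then have "Inf (ennreal ` M) \<le> ennreal e" by (auto intro: Inf_lower)
    also have "ennreal e < y" using e1 e2 unfolding e_def by (simp add: max_def)
    finally show "Inf (ennreal ` M) \<le> y" by simp
  qed
  show ?thesis unfolding bottleneck_dist_def hemidist_def
    using le1 le2 ge unfolding M_def E1_def E2_def by (simp add: antisym)
qed

end
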